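(* For $v \in l^2(\mathbb{T}_t; \mathbb{R}^{m_2})$, $k\in\mathbb{T}_t$, $\widetilde{v}_k \in l^2(k; \mathbb{R}^{m_2})$ and $\varepsilon \in\mathbb{R}$, let $v^\varepsilon_\ell=v_k+\varepsilon \widetilde{v}_k$ if $\ell=k$ and $v^\varepsilon_\ell=v_\ell$ if $\ell\neq k$, $\ell\in \mathbb{T}_t$, and $v^\varepsilon=(v_t^\varepsilon, \ldots, v^\varepsilon_{N-1})$. Then \begin{eqnarray*} &&J_2(k, X_k; \alpha^t(x, v^\varepsilon)|_{\mathbb{T}_{k}}, (v_k+\varepsilon \widetilde{v}_k, v|_{\mathbb{T}_{k+1}}))- J_2(k, X_k; \alpha^t(x, v)|_{\mathbb{T}_{k}}, v|_{\mathbb{T}_{k}})\\ &&=2\varepsilon \Big{[}\widetilde{B}_k^TZ_{k+1}+\widetilde{B}_{k}^T\overline{Z}_{k+1}^{(k)}+W_2v_k +(H_k^2)^TR_2(H_k^1X_k+H_k^2v_k+H_k^3\pi_{k+1})\\ &&\hphantom{=}+\sum_{i=t}^{k-1}C_{k}\widetilde{A}_{k-1}\cdots \widetilde{A}_{i+1}\widetilde{C}_{i}^T\overline{Z}_{i+1}^{(k)} \Big{]}^T\widetilde{v}_k+\varepsilon^2\widehat{J}_2(k, 0; \widetilde{v}_k). \end{eqnarray*} Here $(X,\pi)$ solves $X_{k+1}=\widetilde{A}_kX_k+\widetilde{B}_kv_{k}+\widetilde{C}_k\pi_{k+1}$, $\pi_k=C_k^Tv_k+\widetilde{A}_k^T\pi_{k+1}$,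 $X_t=x$, $\pi_N=0$, $k\in\mathbb{T}_t$; $Z$ solves $Z_k=Q_2X_{k}+A^TZ_{k+1}$, $Z_{N}=G_2X_N$, $k \in \mathbb{T}_t$; and for each $k\in\mathbb{T}_t$, $\overline{Z}^{(k)}$ solves $\overline{Z}^{(k)}_{\ell}=(H_{\ell}^1)^TR_2(H_{\ell}^1X_{\ell}+H^2_{\ell}v_{\ell}+H^3_{\ell}\pi_{\ell+1})-(H_{\ell}^1)^TB_1^TZ_{\ell+1}+\widetilde{A}_{\ell}^T\overline{Z}^{(k)}_{\ell+1}$ for $\ell\in\mathbb{T}_{k}$, $\overline{Z}^{(k)}_{i}=\widetilde{A}_{i}^T\overline{Z}^{(k)}_{i+1}$ for $i\in \{t, \ldots,k-1\}$, $\overline{Z}^{(k)}_{N}=0$. Furthermore, \begin{eqnarray*} \widehat{J}_2(k, 0; \widetilde{v}_k)&=&\sum_{\ell=k}^{N-1}\xi_\ell^TQ_2\xi_\ell+ \sum_{\ell=k+1}^{N-1}(\eta^{(k)}_{\ell})^T(H_{\ell}^1)^TR_2H_{\ell}^1\eta^{(k)}_{\ell} + \widetilde{v}_k^TW_{2} \widetilde{v}_k \\ &&+\xi_{N}^TG_2\xi_{N}+(H_k^1\eta^{(k)}_k+H^2_k \widetilde{v}_k)^TR_2(H_k^1\eta^{(k)}_k+H^2_k \widetilde{v}_k), \end{eqnarray*} where $\eta^{(k)}_{t}=0$, $\eta^{(k)}_{i+1}=\widetilde{A}_{i}\eta^{(k)}_{i}+ \widetilde{C}_{i} \widetilde{A}_{i+1}^T\cdots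 \widetilde{A}_{k-1}^TC_{k}^T\widetilde{v}_k$ for $i\in \{t, \ldots, k-1\}$, $\eta^{(k)}_{k+1}=\widetilde{A}_k\eta^{(k)}_k+ \widetilde{B}_k\widetilde{v}_k$, $\eta^{(k)}_{\ell+1}=\widetilde{A}_\ell\eta^{(k)}_{\ell}$ for $\ell\in \mathbb{T}_{k+1}$; and $\xi_k=0$, $\xi_{k+1}=A\xi_k-B_1H_k^1\eta^{(k)}_k+ \widetilde{B}_k\widetilde{v}_k$, $\xi_{\ell+1}=A\xi_\ell-B_1H_{\ell}^1\eta^{(k)}_{\ell}$ for $\ell\in \mathbb{T}_{k+1}$. The product $\widetilde{A}_{i+1}^T\cdots \widetilde{A}_{k-1}^T$ equals $I$ if $i+1>k-1$, and $\widetilde{A}_{k-1}\cdots \widetilde{A}_{i+1}$ is its transpose.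
   Context: Let $N>2$ be an integer, $\mathbb{T}_t=\{t,\ldots,N-1\}$ for $t\in\{0,\ldots,N-1\}$, $l^2(\mathbb{T}_t;\mathbb{R}^m)$ the space of sequences $\{\rho_k,k\in\mathbb{T}_t\}$ with $\rho_k\in\mathbb{R}^m$, $l^2(k;\mathbb{R}^m)=\mathbb{R}^m$, and for a process $v$ let $v|_{\mathbb{T}_k}=(v_k,\ldots,v_{N-1})$. Consider the system $X_{k+1}=AX_k+B_1u_k+B_2v_k$, $X_t=x$, $k\in\mathbb{T}_t$, with cost functionals $J_i(t,x;u,v)=\sum_{k=t}^{N-1}(X_k^TQ_iX_k+u_k^TR_iu_k+v_k^TW_iv_k)+X_N^TG_iX_N$, $i=1,2$, deterministic matrices and $Q_i,G_i,R_i,W_i$ nonnegative definite; $J_i(k,y;\cdot,\cdot)$ denotes the same functional started at time $k$ from state $y$ with controls on $\mathbb{T}_k$ (the state inside is propagated by the original dynamics). Assume $M_k=B_1^TP_{k+1}B_1+R_1$, $k\in\mathbb{T}_t$, are positive definite, where $P_k=Q_1+A^TP_{k+1}A-A^TP_{k+1}B_1M_k^{-1}B_1^TP_{k+1}A$, $P_N=G_1$. Set $H^1_k=M_k^{-1}B_1^TP_{k+1}A$, $H^2_k=M_k^{-1}B_1^TP_{k+1}B_2$, $H^3_k=M_k^{-1}B_1^T$, $\widetilde{A}_k=A-B_1H^1_k$, $\widetilde{B}_k=B_2-B_1H^2_k$, $\widetilde{C}_k=-B_1H^3_k$, $C_k=(B_2^T-B_2^TP_{k+1}B_1M_k^{-1}B_1^T)P_{k+1}A$.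 The follower's equilibrium response map is $[\alpha^t(x,v)]_k=-(H^1_kX_k+H^2_kv_k+H^3_k\pi_{k+1})$, $k\in\mathbb{T}_t$, where $(X,\pi)$ solves $X_{k+1}=\widetilde{A}_kX_k+\widetilde{B}_kv_k+\widetilde{C}_k\pi_{k+1}$, $\pi_k=C_k^Tv_k+\widetilde{A}_k^T\pi_{k+1}$, $X_t=x$, $\pi_N=0$. *)

theory Defs
  imports "HOL-Analysis.Analysis"
begin

text \<open>Dimension types: 'n = state (R^n), 'a = follower control (R^m1), 'b = leader control (R^m2).
  Sequences indexed by time are functions nat => vector; only the indices in the relevant
  time window matter.\<close>

primrec fwd_aux :: "(nat \<Rightarrow> 'x \<Rightarrow> 'x) \<Rightarrow> nat \<Rightarrow> 'x \<Rightarrow> nat \<Rightarrow> 'x" where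
  "fwd_aux f t x 0 = x"
| "fwd_aux f t x (Suc j) = f (t + j) (fwd_aux f t x j)"

definition fwd :: "(nat \<Rightarrow> 'x \<Rightarrow> 'x) \<Rightarrow> nat \<Rightarrow> 'x \<Rightarrow> nat \<Rightarrow> 'x" where
  "fwd f t x k = fwd_aux f t x (k - t)"

primrec bwd_aux :: "(nat \<Rightarrow> 'x \<Rightarrow> 'x) \<Rightarrow> nat \<Rightarrow> 'x \<Rightarrow> nat \<Rightarrow> 'x" where
  "bwd_aux f N y 0 = y"
| "bwd_aux f N y (Suc j) = f (N - Suc j) (bwd_aux f N y j)"

definition bwd :: "(nat \<Rightarrow> 'x \<Rightarrow> 'x) \<Rightarrow> nat \<Rightarrow> 'x \<Rightarrow> nat \<Rightarrow> 'x" where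
  "bwd f N y k = bwd_aux f N y (N - k)"

primrec mprod :: "(nat \<Rightarrow> real^'n^'n) \<Rightarrow> nat \<Rightarrow> nat \<Rightarrow> real^'n^'n" where
  "mprod F lo 0 = mat 1"
| "mprod F lo (Suc n) = F (lo + n) ** mprod F lo n"

definition quad :: "real^'n^'n \<Rightarrow> real^'n \<Rightarrow> real" where
  "quad M x = x \<bullet> (M *v x)"

definition nonneg_def :: "real^'n^'n \<Rightarrow> bool" where
  "nonneg_def M \<longleftrightarrow> transpose M = M \<and> (\<forall>x. 0 \<le> quad M x)"

definition pos_def :: "real^'n^'n \<Rightarrow> bool" where
  "pos_def M \<longleftrightarrow> transpose M = M \<and> (\<forall>x. x \<noteq> 0 \<longrightarrow> 0 < quad M x)"

definition Pm :: "real^'n^'n \<Rightarrow> real^'a^'n \<Rightarrow> real^'n^'n \<Rightarrow> real^'a^'a \<Rightarrow> real^'n^'n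
                   \<Rightarrow> nat \<Rightarrow> nat \<Rightarrow> real^'n^'n" where
  "Pm A B1 Q1 R1 G1 N k = bwd (\<lambda>j P. Q1 + transpose A ** P ** A
        - transpose A ** P ** B1 ** matrix_inv (transpose B1 ** P ** B1 + R1) ** transpose B1 ** P ** A)
        N G1 k"

definition Mm :: "real^'n^'n \<Rightarrow> real^'a^'n \<Rightarrow> real^'n^'n \<Rightarrow> real^'a^'a \<Rightarrow> real^'n^'n
                   \<Rightarrow> nat \<Rightarrow> nat \<Rightarrow> real^'a^'a" where
  "Mm A B1 Q1 R1 G1 N k = transpose B1 ** Pm A B1 Q1 R1 G1 N (Suc k) ** B1 + R1"

definition H1 :: "real^'n^'n \<Rightarrow> real^'a^'n \<Rightarrow> real^'n^'n \<Rightarrow> real^'a^'a \<Rightarrow> real^'n^'n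
                   \<Rightarrow> nat \<Rightarrow> nat \<Rightarrow> real^'n^'a" where
  "H1 A B1 Q1 R1 G1 N k = matrix_inv (Mm A B1 Q1 R1 G1 N k) ** transpose B1
        ** Pm A B1 Q1 R1 G1 N (Suc k) ** A"

definition H2 :: "real^'n^'n \<Rightarrow> real^'a^'n \<Rightarrow> real^'b^'n \<Rightarrow> real^'n^'n \<Rightarrow> real^'a^'a \<Rightarrow> real^'n^'n
                   \<Rightarrow> nat \<Rightarrow> nat \<Rightarrow> real^'b^'a" where
  "H2 A B1 B2 Q1 R1 G1 N k = matrix_inv (Mm A B1 Q1 R1 G1 N k) ** transpose B1
        ** Pm A B1 Q1 R1 G1 N (Suc k) ** B2"

definition H3 :: "real^'n^'n \<Rightarrow> real^'a^'n \<Rightarrow> real^'n^'n \<Rightarrow> real^'a^'a \<Rightarrow> real^'n^'n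
                   \<Rightarrow> nat \<Rightarrow> nat \<Rightarrow> real^'n^'a" where
  "H3 A B1 Q1 R1 G1 N k = matrix_inv (Mm A B1 Q1 R1 G1 N k) ** transpose B1"

definition Atil :: "real^'n^'n \<Rightarrow> real^'a^'n \<Rightarrow> real^'n^'n \<Rightarrow> real^'a^'a \<Rightarrow> real^'n^'n
                   \<Rightarrow> nat \<Rightarrow> nat \<Rightarrow> real^'n^'n" where
  "Atil A B1 Q1 R1 G1 N k = A - B1 ** H1 A B1 Q1 R1 G1 N k"

definition Btil :: "real^'n^'n \<Rightarrow> real^'a^'n \<Rightarrow> real^'b^'n \<Rightarrow> real^'n^'n \<Rightarrow> real^'a^'a \<Rightarrow> real^'n^'n
                   \<Rightarrow> nat \<Rightarrow> nat \<Rightarrow> real^'b^'n" where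
  "Btil A B1 B2 Q1 R1 G1 N k = B2 - B1 ** H2 A B1 B2 Q1 R1 G1 N k"

definition Ctil :: "real^'n^'n \<Rightarrow> real^'a^'n \<Rightarrow> real^'n^'n \<Rightarrow> real^'a^'a \<Rightarrow> real^'n^'n
                   \<Rightarrow> nat \<Rightarrow> nat \<Rightarrow> real^'n^'n" where
  "Ctil A B1 Q1 R1 G1 N k = - (B1 ** H3 A B1 Q1 R1 G1 N k)"

definition Cm :: "real^'n^'n \<Rightarrow> real^'a^'n \<Rightarrow> real^'b^'n \<Rightarrow> real^'n^'n \<Rightarrow> real^'a^'a \<Rightarrow> real^'n^'n
                   \<Rightarrow> nat \<Rightarrow> nat \<Rightarrow> real^'n^'b" where
  "Cm A B1 B2 Q1 R1 G1 N k =
     (transpose B2 - transpose B2 ** Pm A B1 Q1 R1 G1 N (Suc k) ** B1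
        ** matrix_inv (Mm A B1 Q1 R1 G1 N k) ** transpose B1)
     ** Pm A B1 Q1 R1 G1 N (Suc k) ** A"

definition piS :: "real^'n^'n \<Rightarrow> real^'a^'n \<Rightarrow> real^'b^'n \<Rightarrow> real^'n^'n \<Rightarrow> real^'a^'a \<Rightarrow> real^'n^'n
                   \<Rightarrow> nat \<Rightarrow> (nat \<Rightarrow> real^'b) \<Rightarrow> nat \<Rightarrow> real^'n" where
  "piS A B1 B2 Q1 R1 G1 N v k =
     bwd (\<lambda>j p. transpose (Cm A B1 B2 Q1 R1 G1 N j) *v v j
                + transpose (Atil A B1 Q1 R1 G1 N j) *v p) N 0 k"

definition XS :: "real^'n^'n \<Rightarrow> real^'a^'n \<Rightarrow> real^'b^'n \<Rightarrow> real^'n^'n \<Rightarrow> real^'a^'a \<Rightarrow> real^'n^'n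
                   \<Rightarrow> nat \<Rightarrow> nat \<Rightarrow> real^'n \<Rightarrow> (nat \<Rightarrow> real^'b) \<Rightarrow> nat \<Rightarrow> real^'n" where
  "XS A B1 B2 Q1 R1 G1 N t x v k =
     fwd (\<lambda>j X. Atil A B1 Q1 R1 G1 N j *v X + Btil A B1 B2 Q1 R1 G1 N j *v v j
                + Ctil A B1 Q1 R1 G1 N j *v piS A B1 B2 Q1 R1 G1 N v (Suc j)) t x k"

definition alpha :: "real^'n^'n \<Rightarrow> real^'a^'n \<Rightarrow> real^'b^'n \<Rightarrow> real^'n^'n \<Rightarrow> real^'a^'a \<Rightarrow> real^'n^'n
                   \<Rightarrow> nat \<Rightarrow> nat \<Rightarrow> real^'n \<Rightarrow> (nat \<Rightarrow> real^'b) \<Rightarrow> nat \<Rightarrow> real^'a" where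
  "alpha A B1 B2 Q1 R1 G1 N t x v k =
     - (H1 A B1 Q1 R1 G1 N k *v XS A B1 B2 Q1 R1 G1 N t x v k
        + H2 A B1 B2 Q1 R1 G1 N k *v v k
        + H3 A B1 Q1 R1 G1 N k *v piS A B1 B2 Q1 R1 G1 N v (Suc k))"

definition Xo :: "real^'n^'n \<Rightarrow> real^'a^'n \<Rightarrow> real^'b^'n \<Rightarrow> nat \<Rightarrow> real^'n
                   \<Rightarrow> (nat \<Rightarrow> real^'a) \<Rightarrow> (nat \<Rightarrow> real^'b) \<Rightarrow> nat \<Rightarrow> real^'n" where
  "Xo A B1 B2 k y u v l = fwd (\<lambda>j X. A *v X + B1 *v u j + B2 *v v j) k y l"

definition Jc :: "real^'n^'n \<Rightarrow> real^'a^'n \<Rightarrow> real^'b^'n \<Rightarrow> real^'n^'n \<Rightarrow> real^'a^'a \<Rightarrow> real^'b^'b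
                   \<Rightarrow> real^'n^'n \<Rightarrow> nat \<Rightarrow> nat \<Rightarrow> real^'n
                   \<Rightarrow> (nat \<Rightarrow> real^'a) \<Rightarrow> (nat \<Rightarrow> real^'b) \<Rightarrow> real" where
  "Jc A B1 B2 Q R W G N k y u v =
     (\<Sum>l = k..<N. quad Q (Xo A B1 B2 k y u v l) + quad R (u l) + quad W (v l))
     + quad G (Xo A B1 B2 k y u v N)"


definition Zs :: "real^'n^'n \<Rightarrow> real^'a^'n \<Rightarrow> real^'b^'n \<Rightarrow> real^'n^'n \<Rightarrow> real^'a^'a \<Rightarrow> real^'n^'n
                   \<Rightarrow> real^'n^'n \<Rightarrow> real^'n^'n
                   \<Rightarrow> nat \<Rightarrow> nat \<Rightarrow> real^'n \<Rightarrow> (nat \<Rightarrow> real^'b) \<Rightarrow> nat \<Rightarrow> real^'n" where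
  "Zs A B1 B2 Q1 R1 G1 Q2 G2 N t x v =
     (let X = XS A B1 B2 Q1 R1 G1 N t x v
      in bwd (\<lambda>j z. Q2 *v X j + transpose A *v z) N (G2 *v X N))"

definition Zbar :: "real^'n^'n \<Rightarrow> real^'a^'n \<Rightarrow> real^'b^'n \<Rightarrow> real^'n^'n \<Rightarrow> real^'a^'a \<Rightarrow> real^'n^'n
                   \<Rightarrow> real^'n^'n \<Rightarrow> real^'a^'a \<Rightarrow> real^'n^'n
                   \<Rightarrow> nat \<Rightarrow> nat \<Rightarrow> real^'n \<Rightarrow> (nat \<Rightarrow> real^'b) \<Rightarrow> nat \<Rightarrow> nat \<Rightarrow> real^'n" where
  "Zbar A B1 B2 Q1 R1 G1 Q2 R2 G2 N t x v k =
     (let X = XS A B1 B2 Q1 R1 G1 N t x v; \<pi> = piS A B1 B2 Q1 R1 G1 N v;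
          Z = Zs A B1 B2 Q1 R1 G1 Q2 G2 N t x v;
          HH1 = H1 A B1 Q1 R1 G1 N; HH2 = H2 A B1 B2 Q1 R1 G1 N; HH3 = H3 A B1 Q1 R1 G1 N;
          AT = Atil A B1 Q1 R1 G1 N
      in bwd (\<lambda>l z. if k \<le> l
               then transpose (HH1 l) *v (R2 *v (HH1 l *v X l + HH2 l *v v l + HH3 l *v \<pi> (Suc l)))
                    - transpose (HH1 l) *v (transpose B1 *v Z (Suc l))
                    + transpose (AT l) *v z
               else transpose (AT l) *v z) N 0)"

text \<open>Note mprod AT (i+1) (k-(i+1)) = Atil_(k-1) ** ... ** Atil_(i+1).\<close>
definition eta :: "real^'n^'n \<Rightarrow> real^'a^'n \<Rightarrow> real^'b^'n \<Rightarrow> real^'n^'n \<Rightarrow> real^'a^'a \<Rightarrow> real^'n^'n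
                   \<Rightarrow> nat \<Rightarrow> nat \<Rightarrow> nat \<Rightarrow> real^'b \<Rightarrow> nat \<Rightarrow> real^'n" where
  "eta A B1 B2 Q1 R1 G1 N t k vt =
     (let AT = Atil A B1 Q1 R1 G1 N; BT = Btil A B1 B2 Q1 R1 G1 N; CT = Ctil A B1 Q1 R1 G1 N;
          C = Cm A B1 B2 Q1 R1 G1 N
      in fwd (\<lambda>i e. if i < k
               then AT i *v e + CT i *v (transpose (mprod AT (Suc i) (k - Suc i)) *v (transpose (C k) *v vt))
               else if i = k then AT i *v e + BT i *v vt
               else AT i *v e) t 0)"

definition xi :: "real^'n^'n \<Rightarrow> real^'a^'n \<Rightarrow> real^'b^'n \<Rightarrow> real^'n^'n \<Rightarrow> real^'a^'a \<Rightarrow> real^'n^'n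
                   \<Rightarrow> nat \<Rightarrow> nat \<Rightarrow> nat \<Rightarrow> real^'b \<Rightarrow> nat \<Rightarrow> real^'n" where
  "xi A B1 B2 Q1 R1 G1 N t k vt =
     (let \<eta> = eta A B1 B2 Q1 R1 G1 N t k vt; HH1 = H1 A B1 Q1 R1 G1 N;
          BT = Btil A B1 B2 Q1 R1 G1 N
      in fwd (\<lambda>l s. if l = k
               then A *v s - B1 *v (HH1 l *v \<eta> l) + BT l *v vt
               else A *v s - B1 *v (HH1 l *v \<eta> l)) k 0)"

definition Jhat :: "real^'n^'n \<Rightarrow> real^'a^'n \<Rightarrow> real^'b^'n \<Rightarrow> real^'n^'n \<Rightarrow> real^'a^'a \<Rightarrow> real^'n^'n
                   \<Rightarrow> real^'n^'n \<Rightarrow> real^'a^'a \<Rightarrow> real^'b^'b \<Rightarrow> real^'n^'n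
                   \<Rightarrow> nat \<Rightarrow> nat \<Rightarrow> nat \<Rightarrow> real^'b \<Rightarrow> real" where
  "Jhat A B1 B2 Q1 R1 G1 Q2 R2 W2 G2 N t k vt =
     (let \<eta> = eta A B1 B2 Q1 R1 G1 N t k vt; \<xi> = xi A B1 B2 Q1 R1 G1 N t k vt;
          HH1 = H1 A B1 Q1 R1 G1 N; HH2 = H2 A B1 B2 Q1 R1 G1 N
      in (\<Sum>l = k..<N. quad Q2 (\<xi> l))
         + (\<Sum>l = Suc k..<N. quad (transpose (HH1 l) ** R2 ** HH1 l) (\<eta> l))
         + quad W2 vt + quad G2 (\<xi> N)
         + quad R2 (HH1 k *v \<eta> k + HH2 k *v vt))"

end

theory Submission
  imports Defs
begin


lemma fwd_base[simp]: "fwd f t x t = x"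
  by (simp add: fwd_def)

lemma fwd_Suc: "t \<le> j \<Longrightarrow> fwd f t x (Suc j) = f j (fwd f t x j)"
  by (simp add: fwd_def Suc_diff_le)

lemma bwd_end: "N \<le> j \<Longrightarrow> bwd f N y j = y"
  by (simp add: bwd_def)

lemma bwd_step: "j < N \<Longrightarrow> bwd f N y j = f j (bwd f N y (Suc j))"
proof -
  assume "j < N"
  then have e: "N - j = Suc (N - Suc j)" by simp
  have "N - Suc (N - Suc j) = j" using \<open>j < N\<close> by simp
  then show ?thesis unfolding bwd_def e by simp
qed

lemma mprod_Suc_low: "mprod F lo (Suc n) = mprod F (Suc lo) n ** F lo"
proof (induction n)
  case 0 then show ?case by (simp add: matrix_mul_lid matrix_mul_rid)
next
  case (Suc n)
  have "mprod F lo (Suc (Suc n)) = F (lo + Suc n) ** (mprod F (Suc lo) n ** F lo)"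
    using Suc by simp
  also have "\<dots> = mprod F (Suc lo) (Suc n) ** F lo"
    by (simp add: matrix_mul_assoc)
  finally show ?case .
qed

lemma dot_adj: "(x::real^'n) \<bullet> (A *v y) = (transpose A *v x) \<bullet> y"
  by (metis dot_lmul_matrix transpose_matrix_vector)

lemma dot_sym_mat: "transpose M = M \<Longrightarrow> (x::real^'n) \<bullet> (M *v y) = y \<bullet> (M *v x)"
  by (metis dot_adj inner_commute)

lemma quad_expand:
  assumes "transpose M = M"
  shows "quad M (a + e *\<^sub>R b) = quad M a + 2 * e * (b \<bullet> (M *v a)) + e\<^sup>2 * quad M b"
proof -
  have "quad M (a + e *\<^sub>R b) = a \<bullet> (M *v a) + e * (a \<bullet> (M *v b)) + e * (b \<bullet> (M *v a)) + e\<^sup>2 * (b \<bullet> (M *v b))"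
    unfolding quad_def by (simp add: algebra_simps inner_add_left inner_add_right power2_eq_square)
  then show ?thesis using dot_sym_mat[OF assms, of a b] unfolding quad_def by simp
qed

lemma quad_neg: "quad M (- a) = quad M a"
proof -
  have "M *v (- a) = - (M *v a)"
    using matrix_vector_mult_diff_distrib[of M 0 a] by simp
  then show ?thesis by (simp add: quad_def)
qed

declare transpose_matrix_vector[simp del]

lemma adjoint_sum:
  fixes a b g f :: "nat \<Rightarrow> real^'n" and M :: "nat \<Rightarrow> real^'n^'n"
  assumes "m \<le> n"
    and ha: "\<And>l. m \<le> l \<Longrightarrow> l < n \<Longrightarrow> a (Suc l) = M l *v a l + f l"
    and hb: "\<And>l. m \<le> l \<Longrightarrow> l < n \<Longrightarrow> b l = transpose (M l) *v b (Suc l) + g l"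
  shows "(\<Sum>l=m..<n. a l \<bullet> g l) + a n \<bullet> b n = a m \<bullet> b m + (\<Sum>l=m..<n. f l \<bullet> b (Suc l))"
  using assms(1)
proof (induction m rule: inc_induct)
  case base then show ?case by simp
next
  case (step i)
  have gi: "g i = b i - transpose (M i) *v b (Suc i)" using hb[of i] step by simp
  have "a i \<bullet> g i = a i \<bullet> b i - (M i *v a i) \<bullet> b (Suc i)"
    unfolding gi by (simp add: inner_diff_right dot_adj)
  also have "\<dots> = a i \<bullet> b i - a (Suc i) \<bullet> b (Suc i) + f i \<bullet> b (Suc i)"
    using ha[of i] step by (simp add: inner_add_left)
  finally have e: "a i \<bullet> g i = a i \<bullet> b i - a (Suc i) \<bullet> b (Suc i) + f i \<bullet> b (Suc i)" .
  have s1: "(\<Sum>l=i..<n. a l \<bullet> g l) = a i \<bullet> g i + (\<Sum>l=Suc i..<n. a l \<bullet> g l)"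
    using step by (simp add: sum.atLeast_Suc_lessThan)
  have s2: "(\<Sum>l=i..<n. f l \<bullet> b (Suc l)) = f i \<bullet> b (Suc i) + (\<Sum>l=Suc i..<n. f l \<bullet> b (Suc l))"
    using step by (simp add: sum.atLeast_Suc_lessThan)
  show ?case using step.IH e s1 s2 by simp
qed

lemma Xo_base[simp]: "Xo A B1 B2 k y u v k = y"
  by (simp add: Xo_def)

lemma Xo_step: "k \<le> l \<Longrightarrow> Xo A B1 B2 k y u v (Suc l) = A *v Xo A B1 B2 k y u v l + B1 *v u l + B2 *v v l"
  by (simp add: Xo_def fwd_Suc)

lemma Xo_lin:
  assumes hu: "\<And>j. k \<le> j \<Longrightarrow> u' j = u j + e *\<^sub>R du j"
    and hv: "\<And>j. k \<le> j \<Longrightarrow> v' j = v j + e *\<^sub>R dv j"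
    and "k \<le> l"
  shows "Xo A B1 B2 k y u' v' l = Xo A B1 B2 k y u v l + e *\<^sub>R Xo A B1 B2 k 0 du dv l"
  using assms(3)
proof (induction l rule: dec_induct)
  case base then show ?case by simp
next
  case (step n)
  show ?case using step hu[of n] hv[of n]
    by (simp add: Xo_step algebra_simps)
qed

lemma Jc_pert:
  assumes hu: "\<And>j. k \<le> j \<Longrightarrow> u' j = u j + e *\<^sub>R du j"
    and hv: "\<And>j. k \<le> j \<Longrightarrow> v' j = v j + e *\<^sub>R dv j"
    and "k \<le> N"
    and sQ: "transpose Q = Q" and sR: "transpose R = R" and sW: "transpose W = W" and sG: "transpose G = G"
  shows "Jc A B1 B2 Q R W G N k y u' v' - Jc A B1 B2 Q R W G N k y u v
     = 2 * e * ((\<Sum>l=k..<N. Xo A B1 B2 k 0 du dv l \<bullet> (Q *v Xo A B1 B2 k y u v l)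
                  + du l \<bullet> (R *v u l) + dv l \<bullet> (W *v v l))
               + Xo A B1 B2 k 0 du dv N \<bullet> (G *v Xo A B1 B2 k y u v N))
       + e\<^sup>2 * Jc A B1 B2 Q R W G N k 0 du dv"
proof -
  let ?X = "Xo A B1 B2 k y u v" and ?xi = "Xo A B1 B2 k 0 du dv"
  have XN: "Xo A B1 B2 k y u' v' N = ?X N + e *\<^sub>R ?xi N"
    using Xo_lin[OF hu hv \<open>k \<le> N\<close>] .
  have "(\<Sum>l=k..<N. quad Q (Xo A B1 B2 k y u' v' l) + quad R (u' l) + quad W (v' l))
      = (\<Sum>l=k..<N. (quad Q (?X l) + quad R (u l) + quad W (v l))
          + 2 * e * (?xi l \<bullet> (Q *v ?X l) + du l \<bullet> (R *v u l) + dv l \<bullet> (W *v v l))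
          + e\<^sup>2 * (quad Q (?xi l) + quad R (du l) + quad W (dv l)))"
  proof (rule sum.cong[OF refl])
    fix l assume "l \<in> {k..<N}"
    then have kl: "k \<le> l" by simp
    have Xl: "Xo A B1 B2 k y u' v' l = ?X l + e *\<^sub>R ?xi l" using Xo_lin[OF hu hv kl] .
    show "quad Q (Xo A B1 B2 k y u' v' l) + quad R (u' l) + quad W (v' l) =
          (quad Q (?X l) + quad R (u l) + quad W (v l))
          + 2 * e * (?xi l \<bullet> (Q *v ?X l) + du l \<bullet> (R *v u l) + dv l \<bullet> (W *v v l))
          + e\<^sup>2 * (quad Q (?xi l) + quad R (du l) + quad W (dv l))"
      unfolding Xl hu[OF kl] hv[OF kl]
        quad_expand[OF sQ] quad_expand[OF sR] quad_expand[OF sW]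
      by (simp add: algebra_simps)
  qed
  also have "\<dots> = (\<Sum>l=k..<N. quad Q (?X l) + quad R (u l) + quad W (v l))
          + 2 * e * (\<Sum>l=k..<N. ?xi l \<bullet> (Q *v ?X l) + du l \<bullet> (R *v u l) + dv l \<bullet> (W *v v l))
          + e\<^sup>2 * (\<Sum>l=k..<N. quad Q (?xi l) + quad R (du l) + quad W (dv l))"
    by (simp add: sum.distrib sum_distrib_left distrib_left)
  finally show ?thesis
    unfolding Jc_def XN quad_expand[OF sG] by (simp add: algebra_simps)
qed

lemma mv_neg_left: "(- M) *v x = - (M *v (x::real^'m))"
  using matrix_vector_mult_diff_rdistrib[of 0 M x] by simp

lemma mv_neg_right: "M *v (- x) = - (M *v (x::real^'m))"
  using matrix_vector_mult_diff_distrib[of M 0 x] by simp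

lemma dot_adj2: "(M *v x) \<bullet> (y::real^'n) = (x::real^'m) \<bullet> (transpose M *v y)"
  by (metis dot_adj inner_commute transpose_transpose)

lemma transpose_diff: "transpose (A - B) = transpose A - transpose (B::real^'m^'n)"
  by (simp add: transpose_def vec_eq_iff)

lemma quad_conj: "quad (transpose H ** R ** H) x = quad R (H *v x)"
  unfolding quad_def by (simp add: matrix_vector_mul_assoc[symmetric] dot_adj)

lemma quad_neg2: "quad M (- a - b) = quad M (a + b)"
  using quad_neg[of M "a + b"] by (simp add: algebra_simps)


theorem proposition1:
  fixes A :: "real^'n^'n" and B1 :: "real^'a^'n" and B2 :: "real^'b^'n"
    and Q1 Q2 G1 G2 :: "real^'n^'n" and R1 R2 :: "real^'a^'a" and W1 W2 :: "real^'b^'b"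
    and N t k :: nat and x :: "real^'n" and v :: "nat \<Rightarrow> real^'b"
    and vt :: "real^'b" and \<epsilon> :: real
  assumes "N > 2" and "t \<le> N - 1" and "t \<le> k" and "k \<le> N - 1"
    and "nonneg_def Q1" and "nonneg_def Q2" and "nonneg_def G1" and "nonneg_def G2"
    and "nonneg_def R1" and "nonneg_def R2" and "nonneg_def W1" and "nonneg_def W2"
    and "\<And>j. t \<le> j \<Longrightarrow> j \<le> N - 1 \<Longrightarrow> pos_def (Mm A B1 Q1 R1 G1 N j)"
  defines "HH1 \<equiv> H1 A B1 Q1 R1 G1 N"
    and "HH2 \<equiv> H2 A B1 B2 Q1 R1 G1 N"
    and "HH3 \<equiv> H3 A B1 Q1 R1 G1 N"
    and "AT \<equiv> Atil A B1 Q1 R1 G1 N"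
    and "BT \<equiv> Btil A B1 B2 Q1 R1 G1 N"
    and "CT \<equiv> Ctil A B1 Q1 R1 G1 N"
    and "C \<equiv> Cm A B1 B2 Q1 R1 G1 N"
    and "\<pi> \<equiv> piS A B1 B2 Q1 R1 G1 N v"
    and "X \<equiv> XS A B1 B2 Q1 R1 G1 N t x v"
    and "Z \<equiv> Zs A B1 B2 Q1 R1 G1 Q2 G2 N t x v"
    and "Zb \<equiv> Zbar A B1 B2 Q1 R1 G1 Q2 R2 G2 N t x v k"
    and "J2 \<equiv> Jc A B1 B2 Q2 R2 W2 G2 N"
    and "veps \<equiv> v(k := v k + \<epsilon> *\<^sub>R vt)"
  shows "J2 k (X k) (alpha A B1 B2 Q1 R1 G1 N t x veps) veps
           - J2 k (X k) (alpha A B1 B2 Q1 R1 G1 N t x v) v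
         = 2 * \<epsilon> * ((transpose (BT k) *v Z (Suc k) + transpose (BT k) *v Zb (Suc k) + W2 *v v k
                  + transpose (HH2 k) *v (R2 *v (HH1 k *v X k + HH2 k *v v k + HH3 k *v \<pi> (Suc k)))
                  + (\<Sum>i = t..<k. C k *v (mprod AT (Suc i) (k - Suc i) *v (transpose (CT i) *v Zb (Suc i)))))
                 \<bullet> vt)
           + \<epsilon>\<^sup>2 * Jhat A B1 B2 Q1 R1 G1 Q2 R2 W2 G2 N t k vt"
proof -
  define w where "w = (\<lambda>j. if j = k then vt else (0::real^'b))"
  have kN: "k < N" using assms by linarith
  have w_k: "w k = vt" by (simp add: w_def)
  have w_ne: "\<And>j. j \<noteq> k \<Longrightarrow> w j = 0" by (simp add: w_def)
  have veps_eq: "veps = (\<lambda>j. v j + \<epsilon> *\<^sub>R w j)"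
    by (auto simp: veps_def w_def)
  have pi_step: "\<And>vv j. j < N \<Longrightarrow> piS A B1 B2 Q1 R1 G1 N vv j
      = transpose (C j) *v vv j + transpose (AT j) *v piS A B1 B2 Q1 R1 G1 N vv (Suc j)"
    unfolding piS_def C_def AT_def by (subst bwd_step) simp_all
  have pi_end: "\<And>vv j. N \<le> j \<Longrightarrow> piS A B1 B2 Q1 R1 G1 N vv j = 0"
    unfolding piS_def by (simp add: bwd_end)
  have XS_base: "\<And>x' vv. XS A B1 B2 Q1 R1 G1 N t x' vv t = x'"
    unfolding XS_def by simp
  have XS_step: "\<And>x' vv j. t \<le> j \<Longrightarrow> XS A B1 B2 Q1 R1 G1 N t x' vv (Suc j)
      = AT j *v XS A B1 B2 Q1 R1 G1 N t x' vv j + BT j *v vv j + CT j *v piS A B1 B2 Q1 R1 G1 N vv (Suc j)"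
    unfolding XS_def AT_def BT_def CT_def by (simp add: fwd_Suc)
  have pi_lin: "\<And>j. piS A B1 B2 Q1 R1 G1 N (\<lambda>j. v j + \<epsilon> *\<^sub>R w j) j
        = piS A B1 B2 Q1 R1 G1 N v j + \<epsilon> *\<^sub>R piS A B1 B2 Q1 R1 G1 N w j"
  proof -
    fix j
    show "piS A B1 B2 Q1 R1 G1 N (\<lambda>j. v j + \<epsilon> *\<^sub>R w j) j
        = piS A B1 B2 Q1 R1 G1 N v j + \<epsilon> *\<^sub>R piS A B1 B2 Q1 R1 G1 N w j"
    proof (cases "N \<le> j")
      case True then show ?thesis by (simp add: pi_end)
    next
      case False
      then have "j \<le> N" by simp
      then show ?thesis
      proof (induction j rule: inc_induct)
        case base then show ?case by (simp add: pi_end)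
      next
        case (step n)
        show ?case using step by (simp add: pi_step algebra_simps)
      qed
    qed
  qed
  have XS_lin: "\<And>j. t \<le> j \<Longrightarrow> XS A B1 B2 Q1 R1 G1 N t x (\<lambda>j. v j + \<epsilon> *\<^sub>R w j) j
        = XS A B1 B2 Q1 R1 G1 N t x v j + \<epsilon> *\<^sub>R XS A B1 B2 Q1 R1 G1 N t 0 w j"
  proof -
    fix j assume "t \<le> j"
    then show "XS A B1 B2 Q1 R1 G1 N t x (\<lambda>j. v j + \<epsilon> *\<^sub>R w j) j
        = XS A B1 B2 Q1 R1 G1 N t x v j + \<epsilon> *\<^sub>R XS A B1 B2 Q1 R1 G1 N t 0 w j"
    proof (induction j rule: dec_induct)
      case base then show ?case by (simp add: XS_base)
    next
      case (step n)
      show ?case using step by (simp add: XS_step pi_lin algebra_simps)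
    qed
  qed

  have alpha_lin: "\<And>j. t \<le> j \<Longrightarrow> alpha A B1 B2 Q1 R1 G1 N t x veps j
      = alpha A B1 B2 Q1 R1 G1 N t x v j + \<epsilon> *\<^sub>R alpha A B1 B2 Q1 R1 G1 N t 0 w j"
    unfolding alpha_def veps_eq by (simp add: XS_lin pi_lin algebra_simps)
  have pw_zero: "\<And>j. k < j \<Longrightarrow> piS A B1 B2 Q1 R1 G1 N w j = 0"
  proof -
    fix j assume kj: "k < j"
    show "piS A B1 B2 Q1 R1 G1 N w j = 0"
    proof (cases "N \<le> j")
      case True then show ?thesis by (simp add: pi_end)
    next
      case False
      then have "j \<le> N" by simp
      then show ?thesis using kj
      proof (induction j rule: inc_induct)
        case base then show ?case by (simp add: pi_end)
      next
        case (step n)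
        then show ?case by (simp add: pi_step w_ne)
      qed
    qed
  qed
  have pw_low: "\<And>j. j \<le> k \<Longrightarrow> piS A B1 B2 Q1 R1 G1 N w j
      = transpose (mprod AT j (k - j)) *v (transpose (C k) *v vt)"
  proof -
    fix j assume "j \<le> k"
    then show "piS A B1 B2 Q1 R1 G1 N w j
      = transpose (mprod AT j (k - j)) *v (transpose (C k) *v vt)"
    proof (induction j rule: inc_induct)
      case base
      show ?case using kN by (simp add: pi_step w_k pw_zero)
    next
      case (step n)
      have e: "k - n = Suc (k - Suc n)" using step by simp
      have "piS A B1 B2 Q1 R1 G1 N w n = transpose (AT n) *v piS A B1 B2 Q1 R1 G1 N w (Suc n)"
        using step kN by (simp add: pi_step w_ne)
      also have "\<dots> = transpose (mprod AT n (k - n)) *v (transpose (C k) *v vt)"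
        unfolding step.IH e mprod_Suc_low matrix_transpose_mul matrix_vector_mul_assoc by (simp add: matrix_mul_assoc)
      finally show ?case .
    qed
  qed

  define eta' where "eta' = XS A B1 B2 Q1 R1 G1 N t 0 w"
  define du where "du = alpha A B1 B2 Q1 R1 G1 N t 0 w"
  define xi' where "xi' = Xo A B1 B2 k 0 du w"
  have eta_base: "eta A B1 B2 Q1 R1 G1 N t k vt t = 0"
    unfolding eta_def Let_def by simp
  have eta_step: "\<And>i. t \<le> i \<Longrightarrow> eta A B1 B2 Q1 R1 G1 N t k vt (Suc i) =
     (if i < k
      then AT i *v eta A B1 B2 Q1 R1 G1 N t k vt i + CT i *v (transpose (mprod AT (Suc i) (k - Suc i)) *v (transpose (C k) *v vt))
      else if i = k then AT i *v eta A B1 B2 Q1 R1 G1 N t k vt i + BT i *v vt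
      else AT i *v eta A B1 B2 Q1 R1 G1 N t k vt i)"
    unfolding eta_def Let_def AT_def CT_def BT_def C_def by (simp add: fwd_Suc)
  have eta_eq: "\<And>j. t \<le> j \<Longrightarrow> eta A B1 B2 Q1 R1 G1 N t k vt j = eta' j"
  proof -
    fix j assume "t \<le> j"
    then show "eta A B1 B2 Q1 R1 G1 N t k vt j = eta' j"
    proof (induction j rule: dec_induct)
      case base then show ?case by (simp add: eta_base eta'_def XS_base)
    next
      case (step n)
      show ?case
      proof (cases "n < k")
        case True
        then show ?thesis using step by (simp add: eta_step eta'_def XS_step w_ne pw_low)
      next
        case False
        then show ?thesis using step by (cases "n = k") (simp_all add: eta_step eta'_def XS_step w_ne w_k pw_zero)
      qed
    qed
  qed
  have X_eq: "\<And>l. k \<le> l \<Longrightarrow> Xo A B1 B2 k (X k) (alpha A B1 B2 Q1 R1 G1 N t x v) v l = X l"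
  proof -
    fix l assume "k \<le> l"
    then show "Xo A B1 B2 k (X k) (alpha A B1 B2 Q1 R1 G1 N t x v) v l = X l"
    proof (induction l rule: dec_induct)
      case base then show ?case by simp
    next
      case (step n)
      have tn: "t \<le> n" using step assms by linarith
      show ?case using step
        unfolding Xo_step[OF step(1)] step.IH X_def XS_step[OF tn] alpha_def
        unfolding AT_def BT_def CT_def Atil_def Btil_def Ctil_def HH1_def HH2_def HH3_def \<pi>_def
        by (simp add: algebra_simps matrix_vector_mul_assoc[symmetric] mv_neg_left mv_neg_right)
    qed
  qed
  have du_hi: "\<And>l. k \<le> l \<Longrightarrow> du l = - (HH1 l *v eta' l + HH2 l *v w l)"
    unfolding du_def alpha_def eta'_def HH1_def HH2_def HH3_def by (simp add: pw_zero)
  have xi_eq: "\<And>l. k \<le> l \<Longrightarrow> xi A B1 B2 Q1 R1 G1 N t k vt l = xi' l"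
  proof -
    fix l assume "k \<le> l"
    then show "xi A B1 B2 Q1 R1 G1 N t k vt l = xi' l"
    proof (induction l rule: dec_induct)
      case base then show ?case by (simp add: xi_def xi'_def Let_def)
    next
      case (step n)
      have tn: "t \<le> n" using step assms by linarith
      have h1: "xi A B1 B2 Q1 R1 G1 N t k vt (Suc n) = (if n = k
               then A *v xi A B1 B2 Q1 R1 G1 N t k vt n - B1 *v (HH1 n *v eta' n) + BT n *v vt
               else A *v xi A B1 B2 Q1 R1 G1 N t k vt n - B1 *v (HH1 n *v eta' n))"
        unfolding xi_def Let_def HH1_def BT_def using step(1) tn
        by (simp add: fwd_Suc eta_eq assms(3))
      have h2: "xi' (Suc n) = A *v xi' n + B1 *v du n + B2 *v w n"
        unfolding xi'_def using step(1) by (rule Xo_step)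
      show ?case
        unfolding h1 h2 step.IH du_hi[OF step(1)] BT_def Btil_def HH2_def[symmetric]
        by (cases "n = k") (simp_all add: w_k w_ne algebra_simps matrix_vector_mul_assoc[symmetric] mv_neg_right)
    qed
  qed

  define r where "r = (\<lambda>l. HH1 l *v X l + HH2 l *v v l + HH3 l *v \<pi> (Suc l))"
  define g where "g = (\<lambda>l. transpose (HH1 l) *v (R2 *v r l) - transpose (HH1 l) *v (transpose B1 *v Z (Suc l)))"
  define f where "f = (\<lambda>l. BT l *v w l + CT l *v piS A B1 B2 Q1 R1 G1 N w (Suc l))"
  have Z_end: "Z N = G2 *v X N"
    unfolding Z_def Zs_def Let_def X_def by (simp add: bwd_end)
  have Z_step: "\<And>l. l < N \<Longrightarrow> Z l = transpose A *v Z (Suc l) + Q2 *v X l"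
    unfolding Z_def Zs_def Let_def X_def by (subst bwd_step) (simp_all add: add.commute)
  have Zb_end: "Zb N = 0"
    unfolding Zb_def Zbar_def Let_def by (simp add: bwd_end)
  have Zb_hi: "\<And>l. k \<le> l \<Longrightarrow> l < N \<Longrightarrow> Zb l = transpose (AT l) *v Zb (Suc l) + g l"
    unfolding Zb_def Zbar_def Let_def g_def r_def HH1_def HH2_def HH3_def AT_def X_def \<pi>_def Z_def
    by (subst bwd_step) (simp_all add: algebra_simps)
  have Zb_lo: "\<And>l. l < k \<Longrightarrow> Zb l = transpose (AT l) *v Zb (Suc l) + 0"
    unfolding Zb_def Zbar_def Let_def AT_def using kN
    by (subst bwd_step) simp_all
  have ur: "\<And>l. alpha A B1 B2 Q1 R1 G1 N t x v l = - r l"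
    unfolding alpha_def r_def X_def \<pi>_def HH1_def HH2_def HH3_def ..
  have eta'_step: "\<And>l. t \<le> l \<Longrightarrow> eta' (Suc l) = AT l *v eta' l + f l"
    unfolding eta'_def f_def by (simp add: XS_step add.assoc)
  have eta'_base: "eta' t = 0" unfolding eta'_def by (simp add: XS_base)
  have xi'_base: "xi' k = 0" unfolding xi'_def by simp
  have xi'_step: "\<And>l. k \<le> l \<Longrightarrow> xi' (Suc l) = A *v xi' l + (B1 *v du l + B2 *v w l)"
    unfolding xi'_def by (simp add: Xo_step add.assoc)

  have sQ: "transpose Q2 = Q2" using assms(6) unfolding nonneg_def_def by simp
  have sG: "transpose G2 = G2" using assms(8) unfolding nonneg_def_def by simp
  have sR: "transpose R2 = R2" using assms(10) unfolding nonneg_def_def by simp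
  have sW: "transpose W2 = W2" using assms(12) unfolding nonneg_def_def by simp
  have hu: "\<And>j. k \<le> j \<Longrightarrow> alpha A B1 B2 Q1 R1 G1 N t x veps j
              = alpha A B1 B2 Q1 R1 G1 N t x v j + \<epsilon> *\<^sub>R du j"
    unfolding du_def using assms(3) by (intro alpha_lin) linarith
  have hv: "\<And>j. k \<le> j \<Longrightarrow> veps j = v j + \<epsilon> *\<^sub>R w j" by (simp add: veps_eq)
  define L where "L = (\<Sum>l=k..<N. xi' l \<bullet> (Q2 *v Xo A B1 B2 k (X k) (alpha A B1 B2 Q1 R1 G1 N t x v) v l)
                  + du l \<bullet> (R2 *v alpha A B1 B2 Q1 R1 G1 N t x v l) + w l \<bullet> (W2 *v v l))
               + xi' N \<bullet> (G2 *v Xo A B1 B2 k (X k) (alpha A B1 B2 Q1 R1 G1 N t x v) v N)"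
  have Jstep: "J2 k (X k) (alpha A B1 B2 Q1 R1 G1 N t x veps) veps
           - J2 k (X k) (alpha A B1 B2 Q1 R1 G1 N t x v) v
         = 2 * \<epsilon> * L + \<epsilon>\<^sup>2 * Jc A B1 B2 Q2 R2 W2 G2 N k 0 du w"
    unfolding J2_def L_def xi'_def
    by (rule Jc_pert[OF hu hv less_imp_le[OF kN] sQ sR sW sG])
  have quad0: "\<And>M. quad M 0 = 0" by (simp add: quad_def)
  have Jhat_eq: "Jc A B1 B2 Q2 R2 W2 G2 N k 0 du w = Jhat A B1 B2 Q1 R1 G1 Q2 R2 W2 G2 N t k vt"
  proof -
    have s1: "(\<Sum>l=k..<N. quad Q2 (xi A B1 B2 Q1 R1 G1 N t k vt l)) = (\<Sum>l=k..<N. quad Q2 (xi' l))"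
      by (rule sum.cong) (auto simp: xi_eq)
    have s2: "(\<Sum>l=Suc k..<N. quad (transpose (HH1 l) ** R2 ** HH1 l) (eta A B1 B2 Q1 R1 G1 N t k vt l))
        = (\<Sum>l=Suc k..<N. quad R2 (du l))"
    proof (rule sum.cong[OF refl])
      fix l assume "l \<in> {Suc k..<N}"
      then have "k < l" "t \<le> l" using assms(3) by auto
      then show "quad (transpose (HH1 l) ** R2 ** HH1 l) (eta A B1 B2 Q1 R1 G1 N t k vt l) = quad R2 (du l)"
        by (simp add: eta_eq du_hi w_ne quad_conj quad_neg)
    qed
    have s3: "(\<Sum>l=Suc k..<N. quad W2 (w l)) = 0"
      by (rule sum.neutral) (auto simp: w_ne quad0)
    have Jh: "Jhat A B1 B2 Q1 R1 G1 Q2 R2 W2 G2 N t k vt =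
       (\<Sum>l=k..<N. quad Q2 (xi' l)) + (\<Sum>l=Suc k..<N. quad R2 (du l)) + quad W2 vt + quad G2 (xi' N)
        + quad R2 (du k)"
      unfolding Jhat_def Let_def HH1_def[symmetric] HH2_def[symmetric] s1 s2
      using kN assms(3) by (simp add: xi_eq eta_eq du_hi w_k quad_neg quad_neg2)
    have "Jc A B1 B2 Q2 R2 W2 G2 N k 0 du w = (\<Sum>l=k..<N. quad Q2 (xi' l)) + (\<Sum>l=k..<N. quad R2 (du l))
         + (\<Sum>l=k..<N. quad W2 (w l)) + quad G2 (xi' N)"
      unfolding Jc_def xi'_def by (simp add: sum.distrib)
    also have "\<dots> = (\<Sum>l=k..<N. quad Q2 (xi' l)) + (quad R2 (du k) + (\<Sum>l=Suc k..<N. quad R2 (du l)))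
         + (quad W2 (w k) + (\<Sum>l=Suc k..<N. quad W2 (w l))) + quad G2 (xi' N)"
      using kN by (simp add: sum.atLeast_Suc_lessThan)
    finally show ?thesis unfolding Jh s3 w_k by simp
  qed

  define S where "S = (\<lambda>l. transpose (BT l) *v Z (Suc l) + transpose (HH2 l) *v (R2 *v r l) + W2 *v v l)"
  have ur': "alpha A B1 B2 Q1 R1 G1 N t x v = (\<lambda>l. - r l)" by (rule ext) (rule ur)
  have X_eq': "\<And>l. k \<le> l \<Longrightarrow> Xo A B1 B2 k (X k) (\<lambda>l. - r l) v l = X l"
    using X_eq unfolding ur' .
  have L1: "L = (\<Sum>l=k..<N. xi' l \<bullet> (Q2 *v X l)) + (\<Sum>l=k..<N. du l \<bullet> (R2 *v (- r l)) + w l \<bullet> (W2 *v v l))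
               + xi' N \<bullet> (G2 *v X N)"
  proof -
    have "L = (\<Sum>l=k..<N. xi' l \<bullet> (Q2 *v X l) + (du l \<bullet> (R2 *v (- r l)) + w l \<bullet> (W2 *v v l)))
               + xi' N \<bullet> (G2 *v X N)"
      unfolding L_def ur'
    proof (rule arg_cong2[where f="(+)"])
      show "(\<Sum>l=k..<N. xi' l \<bullet> (Q2 *v Xo A B1 B2 k (X k) (\<lambda>l. - r l) v l) + du l \<bullet> (R2 *v - r l) + w l \<bullet> (W2 *v v l))
          = (\<Sum>l=k..<N. xi' l \<bullet> (Q2 *v X l) + (du l \<bullet> (R2 *v (- r l)) + w l \<bullet> (W2 *v v l)))"
        by (rule sum.cong) (auto simp: X_eq' add.assoc)
      show "xi' N \<bullet> (G2 *v Xo A B1 B2 k (X k) (\<lambda>l. - r l) v N) = xi' N \<bullet> (G2 *v X N)"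
        using kN by (simp add: X_eq')
    qed
    then show ?thesis by (simp add: sum.distrib)
  qed
  have A1: "(\<Sum>l=k..<N. xi' l \<bullet> (Q2 *v X l)) + xi' N \<bullet> Z N
        = xi' k \<bullet> Z k + (\<Sum>l=k..<N. (B1 *v du l + B2 *v w l) \<bullet> Z (Suc l))"
    by (rule adjoint_sum[where M="\<lambda>_. A"]) (use kN xi'_step Z_step in auto)
  have P: "\<And>l. k \<le> l \<Longrightarrow> (B1 *v du l + B2 *v w l) \<bullet> Z (Suc l) + (du l \<bullet> (R2 *v (- r l)) + w l \<bullet> (W2 *v v l))
        = eta' l \<bullet> g l + w l \<bullet> S l"
  proof -
    fix l assume kl: "k \<le> l"
    show "(B1 *v du l + B2 *v w l) \<bullet> Z (Suc l) + (du l \<bullet> (R2 *v (- r l)) + w l \<bullet> (W2 *v v l))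
        = eta' l \<bullet> g l + w l \<bullet> S l"
      unfolding du_hi[OF kl] g_def S_def BT_def Btil_def HH2_def[symmetric]
      by (simp add: dot_adj2 inner_add_left inner_add_right inner_diff_right inner_diff_left
          mv_neg_right transpose_diff matrix_transpose_mul matrix_vector_mult_diff_rdistrib
          matrix_vector_mul_assoc[symmetric])
  qed
  have L2: "L = (\<Sum>l=k..<N. eta' l \<bullet> g l) + vt \<bullet> S k"
  proof -
    have "L = (\<Sum>l=k..<N. (B1 *v du l + B2 *v w l) \<bullet> Z (Suc l) + (du l \<bullet> (R2 *v (- r l)) + w l \<bullet> (W2 *v v l)))"
      using L1 A1 by (simp add: xi'_base Z_end sum.distrib)
    also have "\<dots> = (\<Sum>l=k..<N. eta' l \<bullet> g l + w l \<bullet> S l)"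
      by (rule sum.cong) (auto simp: P)
    also have "\<dots> = (\<Sum>l=k..<N. eta' l \<bullet> g l) + (w k \<bullet> S k + (\<Sum>l=Suc k..<N. w l \<bullet> S l))"
      using kN by (simp add: sum.distrib sum.atLeast_Suc_lessThan)
    also have "(\<Sum>l=Suc k..<N. w l \<bullet> S l) = 0"
      by (rule sum.neutral) (auto simp: w_ne)
    finally show ?thesis by (simp add: w_k)
  qed
  have A2: "(\<Sum>l=k..<N. eta' l \<bullet> g l) + eta' N \<bullet> Zb N
        = eta' k \<bullet> Zb k + (\<Sum>l=k..<N. f l \<bullet> Zb (Suc l))"
    by (rule adjoint_sum[where M=AT]) (use kN eta'_step Zb_hi assms(3) in auto)
  have A2b: "(\<Sum>l=k..<N. f l \<bullet> Zb (Suc l)) = vt \<bullet> (transpose (BT k) *v Zb (Suc k))"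
  proof -
    have "(\<Sum>l=k..<N. f l \<bullet> Zb (Suc l)) = f k \<bullet> Zb (Suc k) + (\<Sum>l=Suc k..<N. f l \<bullet> Zb (Suc l))"
      using kN by (simp add: sum.atLeast_Suc_lessThan)
    also have "(\<Sum>l=Suc k..<N. f l \<bullet> Zb (Suc l)) = 0"
      by (rule sum.neutral) (auto simp: f_def w_ne pw_zero)
    finally show ?thesis by (simp add: f_def w_k pw_zero dot_adj2)
  qed
  have A3: "(\<Sum>l=t..<k. eta' l \<bullet> 0) + eta' k \<bullet> Zb k
        = eta' t \<bullet> Zb t + (\<Sum>l=t..<k. f l \<bullet> Zb (Suc l))"
    by (rule adjoint_sum[where M=AT]) (use eta'_step Zb_lo assms(3) in auto)
  have A3b: "(\<Sum>l=t..<k. f l \<bullet> Zb (Suc l))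
      = (\<Sum>i=t..<k. vt \<bullet> (C k *v (mprod AT (Suc i) (k - Suc i) *v (transpose (CT i) *v Zb (Suc i)))))"
  proof (rule sum.cong[OF refl])
    fix i assume "i \<in> {t..<k}"
    then have "i < k" by simp
    then show "f i \<bullet> Zb (Suc i) = vt \<bullet> (C k *v (mprod AT (Suc i) (k - Suc i) *v (transpose (CT i) *v Zb (Suc i))))"
      by (simp add: f_def w_ne pw_low dot_adj2)
  qed
  have L_eq: "L = vt \<bullet> S k + vt \<bullet> (transpose (BT k) *v Zb (Suc k))
     + (\<Sum>i=t..<k. vt \<bullet> (C k *v (mprod AT (Suc i) (k - Suc i) *v (transpose (CT i) *v Zb (Suc i)))))"
    using L2 A2 A2b A3 A3b by (simp add: Zb_end eta'_base)
  have fin: "L = (transpose (BT k) *v Z (Suc k) + transpose (BT k) *v Zb (Suc k) + W2 *v v k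
                  + transpose (HH2 k) *v (R2 *v (HH1 k *v X k + HH2 k *v v k + HH3 k *v \<pi> (Suc k)))
                  + (\<Sum>i = t..<k. C k *v (mprod AT (Suc i) (k - Suc i) *v (transpose (CT i) *v Zb (Suc i)))))
                 \<bullet> vt"
    unfolding L_eq S_def r_def
    by (simp add: inner_add_left inner_sum_left inner_commute[of vt] algebra_simps)
  show ?thesis unfolding Jstep Jhat_eq fin ..
qed

end
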